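(* Assume $R$ is totally ordered. Let $\mathcal{G}=(\mathcal{N},\mathcal{E})$ be a P-graph with Laplacian $L$ such that there are two nodes $i,j\in\mathcal{N}$ with $\mathcal{E}_{ji}\neq\emptyset$ and $L_{ij}=0$ (that is, the labels of the parallel edges from $j$ to $i$ sum to zero). Then there is a P-graph $\mathcal{G}'=(\mathcal{N},\mathcal{E}')$ with Laplacian $L$ and $\mathcal{E}'_{ji}=\emptyset$. Moreover, the edges of $\mathcal{G}'$ and $\mathcal{G}$ agree after potentially splitting some edges of $\mathcal{G}$ with source $j$ into several parallel edges.
   Context: $R$ is a ring with a total order compatible with the ring operations; $R_{<0},R_{>0},R_{\ge0}$ denote negative, positive, nonnegative elements. $\mathcal{G}=(\mathcal{N},\mathcal{E})$ is a multidigraph with source/target maps $s,t$, no self-loops, $\mathcal{N}=\{1,\dots,m+1\}$, labeling $\pi\colon\mathcal{E}\to R$; $\mathcal{E}_{ji}=\{e: s(e)=j,t(e)=i\}$. Laplacian: $L_{ij}=\sum_{e\in\mathcal{E}_{ji}}\pi(e)$ for $i\ne j$, $L_{ii}=-\sum_{k\ne i}L_{ki}$. Splitting an edge $e$ means replacing it by several parallel edges (same source and target) whose labels sum to $\pi(e)$. A cycle is a closed directed path with no repeated nodes. $\mathcal{E}^-=\{e:\pi(e)\in R_{<0}\}$, $\mathcal{E}^+=\{e:\pi(e)\in R_{>0}\}$. An edge partition $(\mathcal{G},\mu)$, $\mu\colon\mathcal{E}^-\to\mathcal{P}(\mathcal{E}^+)$, satisfies (i) $\mathcal{E}=\mathcal{E}^+\sqcup\mathcal{E}^-$;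 (ii) every cycle contains at most one edge of $\mathcal{E}^-$; (iii) for $e\in\mathcal{E}^-$: (a) $e'\in\mu(e)\Rightarrow s(e')=s(e)$; (b) $e'\in\mu(e)\Rightarrow$ every cycle containing $e'$ contains $t(e)$; (c) $\mu(e)\cap\mu(e')=\emptyset$ for $e\ne e'$. $\mathcal{G}$ is a P-graph if some edge partition $(\mathcal{G},\mu)$ also satisfies (iv) $\pi(e)+\sum_{e'\in\mu(e)}\pi(e')\in R_{\ge0}$ for all $e\in\mathcal{E}^-$. *)

theory Defs
  imports Main
begin

text \<open>Edges are identified by natural
numbers (an arbitrary finite set E of identifiers); s, t are source and target maps and
pi is the labelling into an ordered ring.\<close>

definition nodes :: "nat \<Rightarrow> nat set" where
  "nodes m = {1..m+1}"

definition multidigraph :: "nat \<Rightarrow> nat set \<Rightarrow> (nat \<Rightarrow> nat) \<Rightarrow> (nat \<Rightarrow> nat) \<Rightarrow> bool" where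
  "multidigraph m E s t \<longleftrightarrow> finite E \<and>
     (\<forall>e\<in>E. s e \<in> nodes m \<and> t e \<in> nodes m \<and> s e \<noteq> t e)"

definition edges_between :: "nat set \<Rightarrow> (nat \<Rightarrow> nat) \<Rightarrow> (nat \<Rightarrow> nat) \<Rightarrow> nat \<Rightarrow> nat \<Rightarrow> nat set" where
  "edges_between E s t j i = {e\<in>E. s e = j \<and> t e = i}"

definition laplacian ::
  "nat \<Rightarrow> nat set \<Rightarrow> (nat \<Rightarrow> nat) \<Rightarrow> (nat \<Rightarrow> nat) \<Rightarrow> (nat \<Rightarrow> 'r::ab_group_add) \<Rightarrow> nat \<Rightarrow> nat \<Rightarrow> 'r" where
  "laplacian m E s t \<pi> i j =
     (if i \<noteq> j then (\<Sum>e\<in>edges_between E s t j i. \<pi> e)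
      else - (\<Sum>k\<in>nodes m - {i}. (\<Sum>e\<in>edges_between E s t i k. \<pi> e)))"

definition is_cycle :: "nat set \<Rightarrow> (nat \<Rightarrow> nat) \<Rightarrow> (nat \<Rightarrow> nat) \<Rightarrow> nat list \<Rightarrow> bool" where
  "is_cycle E s t c \<longleftrightarrow> c \<noteq> [] \<and> set c \<subseteq> E \<and>
     (\<forall>l. Suc l < length c \<longrightarrow> t (c ! l) = s (c ! Suc l)) \<and>
     t (last c) = s (hd c) \<and> distinct (map s c)"

definition cycle_nodes :: "(nat \<Rightarrow> nat) \<Rightarrow> nat list \<Rightarrow> nat set" where
  "cycle_nodes s c = s ` set c"

definition neg_edges :: "nat set \<Rightarrow> (nat \<Rightarrow> 'r::linordered_ring_strict) \<Rightarrow> nat set" where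
  "neg_edges E \<pi> = {e\<in>E. \<pi> e < 0}"

definition pos_edges :: "nat set \<Rightarrow> (nat \<Rightarrow> 'r::linordered_ring_strict) \<Rightarrow> nat set" where
  "pos_edges E \<pi> = {e\<in>E. \<pi> e > 0}"

definition edge_partition ::
  "nat set \<Rightarrow> (nat \<Rightarrow> nat) \<Rightarrow> (nat \<Rightarrow> nat) \<Rightarrow> (nat \<Rightarrow> 'r::linordered_ring_strict) \<Rightarrow> (nat \<Rightarrow> nat set) \<Rightarrow> bool" where
  "edge_partition E s t \<pi> \<mu> \<longleftrightarrow>
     (\<forall>e\<in>E. \<pi> e \<noteq> 0) \<and>
     (\<forall>c. is_cycle E s t c \<longrightarrow> card (set c \<inter> neg_edges E \<pi>) \<le> 1) \<and>
     (\<forall>e\<in>neg_edges E \<pi>. \<mu> e \<subseteq> pos_edges E \<pi> \<and>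
        (\<forall>e'\<in>\<mu> e. s e' = s e) \<and>
        (\<forall>e'\<in>\<mu> e. \<forall>c. is_cycle E s t c \<and> e' \<in> set c \<longrightarrow> t e \<in> cycle_nodes s c)) \<and>
     (\<forall>e\<in>neg_edges E \<pi>. \<forall>e'\<in>neg_edges E \<pi>. e \<noteq> e' \<longrightarrow> \<mu> e \<inter> \<mu> e' = {})"

definition P_graph ::
  "nat \<Rightarrow> nat set \<Rightarrow> (nat \<Rightarrow> nat) \<Rightarrow> (nat \<Rightarrow> nat) \<Rightarrow> (nat \<Rightarrow> 'r::linordered_ring_strict) \<Rightarrow> bool" where
  "P_graph m E s t \<pi> \<longleftrightarrow> multidigraph m E s t \<and>
     (\<exists>\<mu>. edge_partition E s t \<pi> \<mu> \<and>
        (\<forall>e\<in>neg_edges E \<pi>. \<pi> e + (\<Sum>e'\<in>\<mu> e. \<pi> e') \<ge> 0))"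

text \<open>G' = (E', s', t', pi') arises from G by deleting the edges from j to i and splitting
some edges of G with source j into several parallel edges: phi sends every edge of G' to
the edge of G it comes from.\<close>
definition split_from ::
  "nat set \<Rightarrow> (nat \<Rightarrow> nat) \<Rightarrow> (nat \<Rightarrow> nat) \<Rightarrow> (nat \<Rightarrow> 'r::ab_group_add) \<Rightarrow>
   nat set \<Rightarrow> (nat \<Rightarrow> nat) \<Rightarrow> (nat \<Rightarrow> nat) \<Rightarrow> (nat \<Rightarrow> 'r) \<Rightarrow> nat \<Rightarrow> nat \<Rightarrow> bool" where
  "split_from E s t \<pi> E' s' t' \<pi>' j i \<longleftrightarrow>
     (\<exists>\<phi>. \<phi> ` E' = E - edges_between E s t j i \<and>
        (\<forall>e'\<in>E'. s' e' = s (\<phi> e') \<and> t' e' = t (\<phi> e')) \<and>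
        (\<forall>e\<in>E - edges_between E s t j i.
            (\<Sum>e'\<in>{e'\<in>E'. \<phi> e' = e}. \<pi>' e') = \<pi> e \<and>
            (card {e'\<in>E'. \<phi> e' = e} \<noteq> 1 \<longrightarrow> s e = j)))"

end

theory Submission
  imports Defs "HOL-Library.Nat_Bijection"
begin


lemma cycle_mod:
  assumes "is_cycle E s t c" "l < length c"
  shows "t (c ! l) = s (c ! (Suc l mod length c))"
proof (cases "Suc l < length c")
  case True
  then show ?thesis using assms unfolding is_cycle_def by auto
next
  case False
  then have "l = length c - 1" "Suc l = length c" using assms(2) by auto
  moreover have "c \<noteq> []" using assms unfolding is_cycle_def by auto
  moreover have "last c = c ! (length c - 1)" "hd c = c ! 0"
    using \<open>c \<noteq> []\<close> by (simp_all add: last_conv_nth hd_conv_nth)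
  ultimately show ?thesis using assms unfolding is_cycle_def by simp
qed

lemma cycle_shortcut:
  assumes cyc: "is_cycle E s t c" and ii: "i \<in> cycle_nodes s c" and jj: "j \<in> cycle_nodes s c"
    and ij: "i \<noteq> j" and p: "p \<in> E" "s p = j" "t p = i"
  shows "\<exists>c'. is_cycle E s t c' \<and> p \<in> set c' \<and> cycle_nodes s c' \<subseteq> insert j (cycle_nodes s c)"
proof -
  let ?L = "length c"
  from ii obtain a where a: "a < ?L" "s (c ! a) = i"
    unfolding cycle_nodes_def by (metis imageE in_set_conv_nth)
  define d where "d = rotate a c"
  have Ld: "length d = ?L" by (simp add: d_def)
  have dn: "d ! k = c ! ((a + k) mod ?L)" if "k < ?L" for k
    using that by (simp add: d_def nth_rotate)
  have L0: "0 < ?L" using a by auto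
  have dmod: "t (d ! k) = s (d ! (Suc k mod ?L))" if "k < ?L" for k
  proof -
    have "t (d ! k) = s (c ! (Suc ((a + k) mod ?L) mod ?L))"
      using cycle_mod[OF cyc] dn[OF that] L0 by simp
    also have "Suc ((a + k) mod ?L) mod ?L = (a + Suc k mod ?L) mod ?L"
      by (metis add_Suc_right mod_Suc_eq mod_add_right_eq)
    finally show ?thesis using dn[of "Suc k mod ?L"] L0 by simp
  qed
  have d0: "s (d ! 0) = i" using dn[of 0] a L0 by simp
  have dist: "distinct (map s d)" using cyc unfolding is_cycle_def d_def
    by (simp add: rotate_map[symmetric])
  have setd: "set d = set c" by (simp add: d_def)
  from jj have "j \<in> s ` set d" using setd by (simp add: cycle_nodes_def)
  then obtain x where x: "x \<in> set d" "s x = j" by auto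
  then obtain m where m: "m < ?L" "s (d ! m) = j" using Ld by (metis in_set_conv_nth)
  have m0: "m \<noteq> 0"
  proof
    assume "m = 0" then show False using m d0 ij by simp
  qed
  define c' where "c' = p # take m d"
  have dsub: "set d \<subseteq> E" using cyc setd unfolding is_cycle_def by auto
  have "is_cycle E s t c'"
    unfolding is_cycle_def
  proof (intro conjI allI impI)
    show "c' \<noteq> []" by (simp add: c'_def)
    show "set c' \<subseteq> E" using dsub p set_take_subset[of m d] by (auto simp: c'_def)
    fix l assume l: "Suc l < length c'"
    then have lm: "l < m" using m Ld by (simp add: c'_def)
    show "t (c' ! l) = s (c' ! Suc l)"
    proof (cases l)
      case 0 then show ?thesis using d0 p m0 by (simp add: c'_def)
    next
      case (Suc l')
      have "t (d ! l') = s (d ! (Suc l' mod ?L))" using dmod[of l'] lm m Suc by simp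
      moreover have "Suc l' mod ?L = Suc l'" using lm m Suc by simp
      ultimately show ?thesis using Suc lm by (simp add: c'_def)
    qed
  next
    have "d \<noteq> []" using Ld L0 by auto
    then have "last c' = d ! (m - 1)" using m0 m Ld by (simp add: c'_def last_conv_nth)
    moreover have "t (d ! (m - 1)) = s (d ! m)" using dmod[of "m - 1"] m m0 by simp
    ultimately show "t (last c') = s (hd c')" using m p by (simp add: c'_def)
  next
    have "distinct (map s (take m d))" using dist by (simp add: take_map[symmetric])
    moreover have "j \<notin> s ` set (take m d)"
    proof
      assume "j \<in> s ` set (take m d)"
      then obtain k where k: "k < m" "s (d ! k) = j" using m Ld
        by (auto simp: in_set_conv_nth)
      then have "map s d ! k = map s d ! m" using m Ld by simp
      then have "k = m" using dist k m Ld nth_eq_iff_index_eq by fastforce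
      then show False using k by simp
    qed
    ultimately show "distinct (map s c')" using p by (simp add: c'_def)
  qed
  moreover have "cycle_nodes s c' \<subseteq> insert j (cycle_nodes s c)"
    using set_take_subset[of m d] p setd by (auto simp: c'_def cycle_nodes_def)
  ultimately show ?thesis by (auto simp: c'_def)
qed



lemma alloc:
  fixes s :: "nat \<Rightarrow> 'r::linordered_ab_group_add"
  assumes "finite A"
  shows "(\<forall>k\<in>A. 0 \<le> s k) \<Longrightarrow> 0 \<le> c \<Longrightarrow> c \<le> sum s A \<Longrightarrow>
    \<exists>y. (\<forall>k. 0 \<le> y k) \<and> (\<forall>k\<in>A. y k \<le> s k) \<and> sum y A = c"
  using assms
proof (induction A arbitrary: c rule: finite_induct)
  case empty
  then show ?case by (intro exI[of _ "\<lambda>_. 0"]) auto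
next
  case (insert k A)
  define c' where "c' = min c (sum s A)"
  have "0 \<le> sum s A" using insert by (simp add: sum_nonneg)
  then have "0 \<le> c'" "c' \<le> sum s A" using insert by (auto simp: c'_def)
  then obtain y where y: "\<forall>k. 0 \<le> y k" "\<forall>k\<in>A. y k \<le> s k" "sum y A = c'"
    using insert by blast
  define y' where "y' = y(k := c - c')"
  have "sum y' A = sum y A" using insert by (intro sum.cong) (auto simp: y'_def)
  moreover have "c - c' \<le> s k" using insert by (auto simp: c'_def min_def diff_le_eq add.commute)
  moreover have "0 \<le> c - c'" by (auto simp: c'_def min_def)
  ultimately have f1: "sum y' (insert k A) = c" using insert y(3) by (simp add: y'_def)
  have f2: "\<forall>k'. 0 \<le> y' k'" using y(1) \<open>0 \<le> c - c'\<close> by (simp add: y'_def)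
  have f3: "\<forall>k'\<in>insert k A. y' k' \<le> s k'"
  proof
    fix k' assume k': "k' \<in> insert k A"
    show "y' k' \<le> s k'"
    proof (cases "k' = k")
      case True then show ?thesis using \<open>c - c' \<le> s k\<close> by (simp add: y'_def)
    next
      case False then have "k' \<in> A" using k' by simp
      then show ?thesis using y(2) False by (simp add: y'_def)
    qed
  qed
  show ?case using f1 f2 f3 by (intro exI[of _ y'] conjI)
qed

lemma transport:
  fixes a b :: "nat \<Rightarrow> 'r::linordered_ab_group_add"
  assumes "finite A" "finite B" "\<forall>k\<in>A. 0 \<le> a k" "\<forall>l\<in>B. 0 \<le> b l" "sum b B \<le> sum a A"
  shows "\<exists>x. (\<forall>k l. 0 \<le> x k l) \<and> (\<forall>k\<in>A. (\<Sum>l\<in>B. x k l) \<le> a k) \<and>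
             (\<forall>l\<in>B. (\<Sum>k\<in>A. x k l) = b l)"
  using assms(2,4,5)
proof (induction B rule: finite_induct)
  case empty
  then show ?case using assms(3) by (intro exI[of _ "\<lambda>_ _. 0"]) auto
next
  case (insert l B)
  have bl: "0 \<le> b l" and bB: "\<forall>l\<in>B. 0 \<le> b l" using insert.prems(1) by auto
  have sle: "b l + sum b B \<le> sum a A" using insert.prems(2) insert.hyps by simp
  have "sum b B \<le> sum a A" using add_increasing[OF bl order_refl[of "sum b B"]] sle by (rule order_trans)
  from insert.IH[OF bB this] obtain x where x: "\<forall>k l. 0 \<le> x k l" "\<forall>k\<in>A. (\<Sum>l\<in>B. x k l) \<le> a k"
     "\<forall>l\<in>B. (\<Sum>k\<in>A. x k l) = b l" by blast
  define sl where "sl k = a k - (\<Sum>l\<in>B. x k l)" for k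
  have tot: "(\<Sum>k\<in>A. (\<Sum>l\<in>B. x k l)) = sum b B"
  proof -
    have "(\<Sum>k\<in>A. (\<Sum>l\<in>B. x k l)) = (\<Sum>l\<in>B. (\<Sum>k\<in>A. x k l))" by (rule sum.swap)
    also have "\<dots> = sum b B" using x(3) by (intro sum.cong refl) simp
    finally show ?thesis .
  qed
  have "sum sl A = sum a A - sum b B"
    by (simp add: sl_def sum_subtractf tot)
  then have "b l \<le> sum sl A" using sle by (simp add: le_diff_eq)
  moreover have "\<forall>k\<in>A. 0 \<le> sl k" using x(2) by (simp add: sl_def)
  ultimately obtain y where y: "\<forall>k. 0 \<le> y k" "\<forall>k\<in>A. y k \<le> sl k" "sum y A = b l"
    using alloc[OF assms(1), of sl "b l"] bl by blast
  define x' where "x' k l' = (if l' = l then y k else x k l')" for k l'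
  have r: "(\<Sum>l'\<in>insert l B. x' k l') = y k + (\<Sum>l'\<in>B. x k l')" for k
  proof -
    have "(\<Sum>l'\<in>B. x' k l') = (\<Sum>l'\<in>B. x k l')"
      using insert.hyps(2) by (intro sum.cong refl) (auto simp: x'_def)
    then show ?thesis using insert.hyps by (simp add: x'_def)
  qed
  show ?case
  proof (intro exI[of _ x'] conjI ballI allI)
    fix k l' show "0 \<le> x' k l'" using x(1) y(1) by (simp add: x'_def)
  next
    fix k assume "k \<in> A"
    then have "y k \<le> a k - (\<Sum>l'\<in>B. x k l')" using y(2) by (simp add: sl_def)
    then show "(\<Sum>l'\<in>insert l B. x' k l') \<le> a k" unfolding r by (simp add: le_diff_eq)
  next
    fix l' assume "l' \<in> insert l B"
    then show "(\<Sum>k\<in>A. x' k l') = b l'"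
    proof
      assume "l' = l" then show ?thesis using y(3) by (simp add: x'_def)
    next
      assume "l' \<in> B" then have "l' \<noteq> l" "(\<Sum>k\<in>A. x k l') = b l'" using insert(2) x(3) by auto
      then show ?thesis by (simp add: x'_def)
    qed
  qed
qed



lemma cycle_map:
  assumes "is_cycle E' (\<lambda>c. s (\<phi> c)) (\<lambda>c. t (\<phi> c)) c" "\<phi> ` E' \<subseteq> E"
  shows "is_cycle E s t (map \<phi> c)"
    "cycle_nodes (\<lambda>c. s (\<phi> c)) c = cycle_nodes s (map \<phi> c)"
proof -
  have ne: "c \<noteq> []" using assms(1) by (simp add: is_cycle_def)
  show "is_cycle E s t (map \<phi> c)"
    using assms ne unfolding is_cycle_def
    by (auto simp: last_map hd_map comp_def)
  show "cycle_nodes (\<lambda>c. s (\<phi> c)) c = cycle_nodes s (map \<phi> c)"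
    by (auto simp: cycle_nodes_def)
qed

theorem lemma3p11:
  fixes m :: nat and E :: "nat set" and s t :: "nat \<Rightarrow> nat"
    and \<pi> :: "nat \<Rightarrow> 'r::linordered_ring_strict" and i j :: nat
  assumes "P_graph m E s t \<pi>"
    and "i \<in> nodes m" and "j \<in> nodes m"
    and "edges_between E s t j i \<noteq> {}"
    and "laplacian m E s t \<pi> i j = 0"
  shows "\<exists>E' s' t' (\<pi>' :: nat \<Rightarrow> 'r).
           P_graph m E' s' t' \<pi>' \<and>
           (\<forall>a\<in>nodes m. \<forall>b\<in>nodes m. laplacian m E' s' t' \<pi>' a b = laplacian m E s t \<pi> a b) \<and>
           edges_between E' s' t' j i = {} \<and>
           split_from E s t \<pi> E' s' t' \<pi>' j i"
proof -
  obtain \<mu> where ep: "edge_partition E s t \<pi> \<mu>"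
    and iv: "\<forall>e\<in>neg_edges E \<pi>. \<pi> e + (\<Sum>e'\<in>\<mu> e. \<pi> e') \<ge> 0"
    and mg: "multidigraph m E s t"
    using assms(1) unfolding P_graph_def by blast
  have nz: "\<forall>e\<in>E. \<pi> e \<noteq> 0"
    and cyc: "\<forall>c. is_cycle E s t c \<longrightarrow> card (set c \<inter> neg_edges E \<pi>) \<le> 1"
    and mu: "\<forall>e\<in>neg_edges E \<pi>. \<mu> e \<subseteq> pos_edges E \<pi> \<and> (\<forall>e'\<in>\<mu> e. s e' = s e) \<and>
        (\<forall>e'\<in>\<mu> e. \<forall>c. is_cycle E s t c \<and> e' \<in> set c \<longrightarrow> t e \<in> cycle_nodes s c)"
    and disj: "\<forall>e\<in>neg_edges E \<pi>. \<forall>e'\<in>neg_edges E \<pi>. e \<noteq> e' \<longrightarrow> \<mu> e \<inter> \<mu> e' = {}"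
    using ep unfolding edge_partition_def by blast+
  have finE: "finite E" and loops: "\<forall>e\<in>E. s e \<in> nodes m \<and> t e \<in> nodes m \<and> s e \<noteq> t e"
    using mg unfolding multidigraph_def by auto
  define Eji where "Eji = edges_between E s t j i"
  have Eji_mem: "e \<in> Eji \<longleftrightarrow> e \<in> E \<and> s e = j \<and> t e = i" for e
    by (simp add: Eji_def edges_between_def)
  have Eji_sub: "Eji \<subseteq> E" using Eji_mem by auto
  have ij: "i \<noteq> j"
  proof -
    obtain e where "e \<in> Eji" using assms(4) Eji_def by auto
    then show ?thesis using loops Eji_mem by auto
  qed
  have lap0: "sum \<pi> Eji = 0" using assms(5) ij unfolding laplacian_def Eji_def by simp
  define N where "N = Eji \<inter> neg_edges E \<pi>"
  define P where "P = Eji \<inter> pos_edges E \<pi>"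
  define F where "F = \<Union>(\<mu> ` N)"
  define F' where "F' = F - P"
  define B where "B = neg_edges E \<pi> - N"
  define b where "b e = sum \<pi> (\<mu> e \<inter> P)" for e
  have negE: "neg_edges E \<pi> \<subseteq> E" and posE: "pos_edges E \<pi> \<subseteq> E"
    by (auto simp: neg_edges_def pos_edges_def)
  have finmu: "finite (\<mu> e)" if "e \<in> neg_edges E \<pi>" for e
    using mu that posE finE by (meson finite_subset subset_trans)
  have NN: "N \<subseteq> neg_edges E \<pi>" by (simp add: N_def)
  have finN: "finite N" using NN negE finE by (meson finite_subset subset_trans)
  have finB: "finite B" using negE finE B_def by (meson Diff_subset finite_subset subset_trans)
  have finP: "finite P" using Eji_sub finE P_def by (meson finite_subset inf_le1 subset_trans)
  have F_pos: "F \<subseteq> pos_edges E \<pi>" using mu NN unfolding F_def by blast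
  have finF: "finite F" using F_pos posE finE by (meson finite_subset subset_trans)
  have finF': "finite F'" using finF F'_def by simp
  have F'_pos: "F' \<subseteq> pos_edges E \<pi>" using F_pos F'_def by auto
  have F'_notEji: "q \<notin> Eji" if "q \<in> F'" for q
    using that F'_pos unfolding F'_def P_def by auto
  have F'_src: "s q = j" if qF: "q \<in> F'" for q
  proof -
    obtain n where n: "n \<in> N" "q \<in> \<mu> n" using qF by (auto simp: F'_def F_def)
    then show ?thesis using mu NN Eji_mem unfolding N_def by auto
  qed
  have F'_cyc: "i \<in> cycle_nodes s c" if qF: "q \<in> F'" and cc: "is_cycle E s t c" "q \<in> set c" for q c
  proof -
    obtain n where n: "n \<in> N" "q \<in> \<mu> n" using qF by (auto simp: F'_def F_def)
    then have "t n = i" using Eji_mem unfolding N_def by auto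
    then show ?thesis using mu NN n cc by blast
  qed
  have F_mu: "\<mu> e \<inter> F = {}" if "e \<in> B" for e
  proof -
    have "\<mu> e \<inter> \<mu> n = {}" if "n \<in> N" for n
    proof -
      have "e \<in> neg_edges E \<pi>" "n \<in> neg_edges E \<pi>" "e \<noteq> n"
        using \<open>e \<in> B\<close> that NN unfolding B_def by auto
      then show ?thesis using disj by blast
    qed
    then show ?thesis unfolding F_def by auto
  qed
  have F'_mu: "\<mu> e \<inter> F' = {}" if "e \<in> B" for e
    using F_mu[OF that] unfolding F'_def by auto
  have demand: "sum b B \<le> sum \<pi> F'"
  proof -
    have fin_muP: "\<forall>e\<in>B. finite (\<mu> e \<inter> P)" using finmu B_def by auto
    have disjB: "\<forall>e\<in>B. \<forall>e'\<in>B. e \<noteq> e' \<longrightarrow> (\<mu> e \<inter> P) \<inter> (\<mu> e' \<inter> P) = {}"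
      using disj B_def by blast
    have s1: "sum b B = sum \<pi> (\<Union>e\<in>B. \<mu> e \<inter> P)"
      unfolding b_def using sum.UNION_disjoint[OF finB fin_muP disjB, of \<pi>] by simp
    have sub: "(\<Union>e\<in>B. \<mu> e \<inter> P) \<subseteq> P - F" using F_mu by blast
    have P0: "\<forall>q\<in>P. 0 \<le> \<pi> q" by (auto simp: P_def pos_edges_def)
    have s2: "sum \<pi> (\<Union>e\<in>B. \<mu> e \<inter> P) \<le> sum \<pi> (P - F)"
      using finP sub P0 by (intro sum_mono2) auto
    have fin_muN: "\<forall>n\<in>N. finite (\<mu> n)" using finmu NN by auto
    have disjN: "\<forall>n\<in>N. \<forall>n'\<in>N. n \<noteq> n' \<longrightarrow> \<mu> n \<inter> \<mu> n' = {}"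
      using disj NN by blast
    have s3: "sum \<pi> F = (\<Sum>n\<in>N. sum \<pi> (\<mu> n))"
      unfolding F_def using sum.UNION_disjoint[OF finN fin_muN disjN] by simp
    have "0 \<le> (\<Sum>n\<in>N. \<pi> n + sum \<pi> (\<mu> n))"
      using iv NN by (intro sum_nonneg) auto
    then have s4: "0 \<le> sum \<pi> N + sum \<pi> F" by (simp add: sum.distrib s3)
    have NP: "Eji = N \<union> P"
    proof
      show "Eji \<subseteq> N \<union> P"
      proof
        fix e assume e: "e \<in> Eji"
        then have "\<pi> e \<noteq> 0" using nz Eji_sub by auto
        then have "\<pi> e < 0 \<or> \<pi> e > 0" by (simp add: neq_iff)
        then show "e \<in> N \<union> P" using e Eji_sub
          by (auto simp: N_def P_def neg_edges_def pos_edges_def)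
      qed
      show "N \<union> P \<subseteq> Eji" by (auto simp: N_def P_def)
    qed
    have "N \<inter> P = {}" by (auto simp: N_def P_def neg_edges_def pos_edges_def)
    then have s5: "sum \<pi> N + sum \<pi> P = 0"
      using lap0 NP finN finP sum.union_disjoint[of N P \<pi>] by simp
    have s6: "sum \<pi> P \<le> sum \<pi> F"
    proof -
      have "sum \<pi> P = sum \<pi> P + 0" by simp
      also have "\<dots> \<le> sum \<pi> P + (sum \<pi> N + sum \<pi> F)" using s4 by (rule add_left_mono)
      also have "\<dots> = (sum \<pi> N + sum \<pi> P) + sum \<pi> F" by (simp add: algebra_simps)
      also have "\<dots> = sum \<pi> F" using s5 by simp
      finally show ?thesis .
    qed
    have "sum \<pi> P = sum \<pi> (P \<inter> F) + sum \<pi> (P - F)" by (rule sum.Int_Diff[OF finP])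
    moreover have "sum \<pi> F = sum \<pi> (P \<inter> F) + sum \<pi> (F - P)"
      using sum.Int_Diff[OF finF, of \<pi> P] by (simp add: Int_commute)
    ultimately have "sum \<pi> (P - F) \<le> sum \<pi> (F - P)" using s6 by simp
    then show ?thesis using s1 s2 unfolding F'_def by simp
  qed
  have a0: "\<forall>q\<in>F'. 0 \<le> \<pi> q" using F'_pos by (auto simp: pos_edges_def)
  have b0: "\<forall>e\<in>B. 0 \<le> b e"
    unfolding b_def P_def by (auto intro!: sum_nonneg simp: pos_edges_def)
  obtain x where x0: "\<forall>q d. 0 \<le> x q d" and xrow: "\<forall>q\<in>F'. (\<Sum>d\<in>B. x q d) \<le> \<pi> q"
    and xcol: "\<forall>d\<in>B. (\<Sum>q\<in>F'. x q d) = b d"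
    using transport[OF finF' finB a0 b0 demand] by blast
  define rem where "rem q = \<pi> q - (\<Sum>d\<in>B. x q d)" for q
  have rem0: "0 \<le> rem q" if "q \<in> F'" for q using xrow that by (simp add: rem_def)
  define \<pi>' :: "nat \<Rightarrow> 'r" where "\<pi>' c = (case prod_decode c of (e, k) \<Rightarrow>
      if k = 0 then (if e \<in> F' then rem e else \<pi> e) else x e (k - 1))" for c
  define \<phi> where "\<phi> c = fst (prod_decode c)" for c
  define C where "C = (\<lambda>e. prod_encode (e, 0)) ` (E - Eji) \<union> (\<lambda>(q, d). prod_encode (q, Suc d)) ` (F' \<times> B)"
  define E' where "E' = {c \<in> C. \<pi>' c \<noteq> 0}"
  define s' where "s' = (\<lambda>c. s (\<phi> c))"
  define t' where "t' = (\<lambda>c. t (\<phi> c))"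
  have pi0: "\<pi>' (prod_encode (e, 0)) = (if e \<in> F' then rem e else \<pi> e)" for e
    by (simp add: \<pi>'_def)
  have piS: "\<pi>' (prod_encode (e, Suc d)) = x e d" for e d
    by (simp add: \<pi>'_def)
  have phiE: "\<phi> (prod_encode (e, k)) = e" for e k by (simp add: \<phi>_def)
  have F'sub: "F' \<subseteq> E - Eji" using F'_pos posE F'_notEji by blast
  have C_phi: "\<phi> c \<in> E - Eji" if "c \<in> C" for c
    using that F'sub unfolding C_def by (auto simp: phiE)
  have finC: "finite C" unfolding C_def using finE finF' finB by simp
  have E'C: "E' \<subseteq> C" unfolding E'_def by auto
  have finE': "finite E'" using finC E'C finite_subset by blast
  have E'_phi: "\<phi> c \<in> E - Eji" if "c \<in> E'" for c using that E'C C_phi by auto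
  have fiberC: "{c \<in> C. \<phi> c = e} = insert (prod_encode (e, 0))
      ((\<lambda>d. prod_encode (e, Suc d)) ` (if e \<in> F' then B else {}))" if e: "e \<in> E - Eji" for e
  proof
    show "{c \<in> C. \<phi> c = e} \<subseteq> insert (prod_encode (e, 0))
      ((\<lambda>d. prod_encode (e, Suc d)) ` (if e \<in> F' then B else {}))"
      unfolding C_def by (auto simp: phiE)
    show "insert (prod_encode (e, 0)) ((\<lambda>d. prod_encode (e, Suc d)) ` (if e \<in> F' then B else {}))
        \<subseteq> {c \<in> C. \<phi> c = e}"
      using e unfolding C_def by (auto simp: phiE)
  qed
  have fibersum: "sum \<pi>' {c \<in> C. \<phi> c = e} = \<pi> e" if e: "e \<in> E - Eji" for e
  proof -
    define B' where "B' = (if e \<in> F' then B else {})"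
    have fB': "finite B'" using finB by (simp add: B'_def)
    have nin: "prod_encode (e, 0) \<notin> (\<lambda>d. prod_encode (e, Suc d)) ` B'" by auto
    have inj: "inj_on (\<lambda>d. prod_encode (e, Suc d)) B'" by (auto simp: inj_on_def)
    have "sum \<pi>' {c \<in> C. \<phi> c = e} = \<pi>' (prod_encode (e, 0)) + sum \<pi>' ((\<lambda>d. prod_encode (e, Suc d)) ` B')"
      unfolding fiberC[OF e] B'_def[symmetric] using fB' nin by simp
    also have "sum \<pi>' ((\<lambda>d. prod_encode (e, Suc d)) ` B') = (\<Sum>d\<in>B'. x e d)"
      using sum.reindex[OF inj, of \<pi>'] by (simp add: piS)
    finally show ?thesis by (simp add: pi0 B'_def rem_def)
  qed
  have filt: "sum \<pi>' {c \<in> E'. Q c} = sum \<pi>' {c \<in> C. Q c}" for Q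
  proof -
    have eq: "{c \<in> E'. Q c} = {c \<in> {c \<in> C. Q c}. \<pi>' c \<noteq> 0}" by (auto simp: E'_def)
    have fin: "finite {c \<in> C. Q c}" using finC by simp
    show ?thesis unfolding eq sum.inter_filter[OF fin] by (intro sum.cong) auto
  qed
  have fiber: "sum \<pi>' {c \<in> E'. \<phi> c = e} = \<pi> e" if "e \<in> E - Eji" for e
    using filt[of "\<lambda>c. \<phi> c = e"] fibersum[OF that] by simp
  have lapsum: "sum \<pi>' (edges_between E' s' t' u v) = sum \<pi> (edges_between E s t u v)" for u v
  proof -
    define S where "S = {c \<in> C. s (\<phi> c) = u \<and> t (\<phi> c) = v}"
    define T where "T = {e \<in> E - Eji. s e = u \<and> t e = v}"
    have "sum \<pi>' (edges_between E' s' t' u v) = sum \<pi>' S"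
      using filt[of "\<lambda>c. s (\<phi> c) = u \<and> t (\<phi> c) = v"]
      by (simp add: edges_between_def s'_def t'_def S_def)
    also have "\<dots> = (\<Sum>e\<in>T. sum \<pi>' {c. c \<in> S \<and> \<phi> c = e})"
      by (rule sum.group[symmetric]) (use finC finE C_phi in \<open>auto simp: S_def T_def\<close>)
    also have "\<dots> = (\<Sum>e\<in>T. \<pi> e)"
    proof (intro sum.cong refl)
      fix e assume e: "e \<in> T"
      then have "{c. c \<in> S \<and> \<phi> c = e} = {c \<in> C. \<phi> c = e}" by (auto simp: S_def T_def)
      then show "sum \<pi>' {c. c \<in> S \<and> \<phi> c = e} = \<pi> e" using fibersum e by (simp add: T_def)
    qed
    also have "\<dots> = sum \<pi> (edges_between E s t u v)"
    proof (cases "u = j \<and> v = i")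
      case True
      then have "T = {}" by (auto simp: T_def Eji_mem)
      moreover have "edges_between E s t u v = Eji" using True by (simp add: Eji_def)
      ultimately show ?thesis using lap0 by simp
    next
      case False
      then have "T = edges_between E s t u v" by (auto simp: T_def Eji_mem edges_between_def)
      then show ?thesis by simp
    qed
    finally show ?thesis .
  qed
  have lap: "laplacian m E' s' t' \<pi>' a c = laplacian m E s t \<pi> a c" for a c
    unfolding laplacian_def lapsum by simp
  have negE': "c = prod_encode (\<phi> c, 0) \<and> \<phi> c \<in> B \<and> \<pi>' c = \<pi> (\<phi> c)"
    if c: "c \<in> neg_edges E' \<pi>'" for c
  proof -
    have cC: "c \<in> C" and cn: "\<pi>' c < 0" using c E'C by (auto simp: neg_edges_def)
    then consider (a) e where "e \<in> E - Eji" "c = prod_encode (e, 0)"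
      | (b) q d where "c = prod_encode (q, Suc d)"
      unfolding C_def by auto
    then show ?thesis
    proof cases
      case (a e)
      have "e \<notin> F'" using rem0 cn a by (auto simp: pi0 not_le[symmetric])
      then have pe: "\<pi>' c = \<pi> e" using a by (simp add: pi0)
      then have "e \<in> neg_edges E \<pi>" using a cn by (auto simp: neg_edges_def)
      moreover have "e \<notin> N" using a by (auto simp: N_def)
      ultimately show ?thesis using a pe by (simp add: phiE B_def)
    next
      case (b q d)
      then show ?thesis using cn x0 by (auto simp: piS not_le[symmetric])
    qed
  qed
  have phiE': "\<phi> ` E' \<subseteq> E" using E'_phi by auto
  have cmap: "is_cycle E s t (map \<phi> c) \<and> cycle_nodes s' c = cycle_nodes s (map \<phi> c)"
    if "is_cycle E' s' t' c" for c
    using cycle_map[of E' s \<phi> t c E] that phiE' unfolding s'_def t'_def by auto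
  have hasP: "\<exists>p. p \<in> \<mu> e \<inter> P" if "e \<in> B" "q \<in> F'" "x q e \<noteq> 0" for e q
  proof (rule ccontr)
    assume "\<not> ?thesis"
    then have "\<mu> e \<inter> P = {}" by auto
    then have "b e = 0" by (simp add: b_def)
    then have "(\<Sum>q\<in>F'. x q e) = 0" using xcol that by simp
    then have "\<forall>q\<in>F'. x q e = 0" using sum_nonneg_eq_0_iff[OF finF', of "\<lambda>q. x q e"] x0 by simp
    then show False using that by simp
  qed
  define \<mu>' where "\<mu>' c = (\<lambda>q. prod_encode (q, 0)) ` (\<mu> (\<phi> c) - P) \<union>
      (\<lambda>q. prod_encode (q, Suc (\<phi> c))) ` {q \<in> F'. x q (\<phi> c) \<noteq> 0}" for c
  have B_neg: "B \<subseteq> neg_edges E \<pi>" by (simp add: B_def)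
  have mu'_sub: "\<mu>' c \<subseteq> pos_edges E' \<pi>'" if c: "c \<in> neg_edges E' \<pi>'" for c
  proof
    fix y assume y: "y \<in> \<mu>' c"
    define e where "e = \<phi> c"
    have eB: "e \<in> B" using negE'[OF c] by (simp add: e_def)
    from y consider (a) q where "q \<in> \<mu> e - P" "y = prod_encode (q, 0)"
      | (b) q where "q \<in> F'" "x q e \<noteq> 0" "y = prod_encode (q, Suc e)"
      unfolding \<mu>'_def e_def by auto
    then show "y \<in> pos_edges E' \<pi>'"
    proof cases
      case (a q)
      have qpos: "q \<in> pos_edges E \<pi>" using a mu eB B_neg by auto
      then have "q \<in> E" using posE by auto
      moreover have "q \<notin> Eji" using a qpos by (auto simp: P_def)
      moreover have "q \<notin> F'" using a F'_mu[OF eB] by auto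
      moreover have "0 < \<pi> q" using qpos by (simp add: pos_edges_def)
      ultimately show ?thesis using a
        by (auto simp: pos_edges_def E'_def C_def pi0)
    next
      case (b q)
      have "0 < x q e" using b x0 by (simp add: order.not_eq_order_implies_strict)
      then show ?thesis using b eB by (auto simp: pos_edges_def E'_def C_def piS)
    qed
  qed
  have mu'_src: "s' y = s' c" if c: "c \<in> neg_edges E' \<pi>'" and y: "y \<in> \<mu>' c" for c y
  proof -
    define e where "e = \<phi> c"
    have eB: "e \<in> B" using negE'[OF c] by (simp add: e_def)
    from y consider (a) q where "q \<in> \<mu> e - P" "y = prod_encode (q, 0)"
      | (b) q where "q \<in> F'" "x q e \<noteq> 0" "y = prod_encode (q, Suc e)"
      unfolding \<mu>'_def e_def by auto
    then show ?thesis
    proof cases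
      case (a q)
      then show ?thesis using mu eB B_neg by (auto simp: s'_def phiE e_def)
    next
      case (b q)
      obtain p where p: "p \<in> \<mu> e" "p \<in> P" using hasP[OF eB b(1,2)] by auto
      have "s e = s p" using mu eB B_neg p by auto
      also have "s p = j" using p by (auto simp: P_def Eji_mem)
      finally show ?thesis using b F'_src by (simp add: s'_def phiE e_def)
    qed
  qed
  have mu'_cyc: "t' c \<in> cycle_nodes s' c'"
    if c: "c \<in> neg_edges E' \<pi>'" and y: "y \<in> \<mu>' c" and cc: "is_cycle E' s' t' c'" and yc: "y \<in> set c'"
    for c y c'
  proof -
    define e where "e = \<phi> c"
    have eB: "e \<in> B" using negE'[OF c] by (simp add: e_def)
    define C2 where "C2 = map \<phi> c'"
    have C2: "is_cycle E s t C2" "cycle_nodes s' c' = cycle_nodes s C2"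
      using cmap[OF cc] by (auto simp: C2_def)
    have yC2: "\<phi> y \<in> set C2" using yc by (simp add: C2_def)
    from y consider (a) q where "q \<in> \<mu> e - P" "y = prod_encode (q, 0)"
      | (b) q where "q \<in> F'" "x q e \<noteq> 0" "y = prod_encode (q, Suc e)"
      unfolding \<mu>'_def e_def by auto
    then have "t e \<in> cycle_nodes s C2"
    proof cases
      case (a q)
      then show ?thesis using mu eB B_neg C2(1) yC2 by (auto simp: phiE)
    next
      case (b q)
      have qC2: "q \<in> set C2" using yC2 b by (simp add: phiE)
      have iC: "i \<in> cycle_nodes s C2" using F'_cyc[OF b(1) C2(1) qC2] .
      have jC: "j \<in> cycle_nodes s C2" using qC2 F'_src[OF b(1)] by (auto simp: cycle_nodes_def)
      obtain p where p: "p \<in> \<mu> e" "p \<in> P" using hasP[OF eB b(1,2)] by auto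
      have pE: "p \<in> E" "s p = j" "t p = i" using p by (auto simp: P_def Eji_mem)
      obtain c'' where c'': "is_cycle E s t c''" "p \<in> set c''"
        "cycle_nodes s c'' \<subseteq> insert j (cycle_nodes s C2)"
        using cycle_shortcut[OF C2(1) iC jC ij pE] by blast
      have "t e \<in> cycle_nodes s c''" using mu eB B_neg p c'' by blast
      moreover have "s e = j" using mu eB B_neg p pE by auto
      moreover have "e \<in> E" using eB B_neg negE by auto
      ultimately have "t e \<noteq> j" using loops by metis
      then show ?thesis using \<open>t e \<in> cycle_nodes s c''\<close> c''(3) by blast
    qed
    then show ?thesis using C2(2) by (simp add: t'_def e_def)
  qed
  have mu'_disj: "\<mu>' c1 \<inter> \<mu>' c2 = {}"
    if c1: "c1 \<in> neg_edges E' \<pi>'" and c2: "c2 \<in> neg_edges E' \<pi>'" and ne: "c1 \<noteq> c2" for c1 c2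
  proof -
    have "\<phi> c1 \<noteq> \<phi> c2" using negE'[OF c1] negE'[OF c2] ne by metis
    moreover have "\<phi> c1 \<in> neg_edges E \<pi>" "\<phi> c2 \<in> neg_edges E \<pi>"
      using negE'[OF c1] negE'[OF c2] B_neg by auto
    ultimately have "\<mu> (\<phi> c1) \<inter> \<mu> (\<phi> c2) = {}" using disj by blast
    then show ?thesis using \<open>\<phi> c1 \<noteq> \<phi> c2\<close> unfolding \<mu>'_def by auto
  qed
  have cyc': "card (set c \<inter> neg_edges E' \<pi>') \<le> 1" if cc: "is_cycle E' s' t' c" for c
  proof -
    have C2: "is_cycle E s t (map \<phi> c)" using cmap[OF cc] by simp
    have "card (set c \<inter> neg_edges E' \<pi>') \<le> card (set (map \<phi> c) \<inter> neg_edges E \<pi>)"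
    proof (rule card_inj_on_le)
      show "inj_on \<phi> (set c \<inter> neg_edges E' \<pi>')"
        by (rule inj_onI) (metis IntD2 negE')
      show "\<phi> ` (set c \<inter> neg_edges E' \<pi>') \<subseteq> set (map \<phi> c) \<inter> neg_edges E \<pi>"
        using negE' B_neg by auto
      show "finite (set (map \<phi> c) \<inter> neg_edges E \<pi>)" by simp
    qed
    also have "\<dots> \<le> 1" using cyc C2 by blast
    finally show ?thesis .
  qed
  have epi: "edge_partition E' s' t' \<pi>' \<mu>'"
    unfolding edge_partition_def
    using mu'_sub mu'_src mu'_cyc mu'_disj cyc' by (auto simp: E'_def)
  have iv': "\<pi>' c + sum \<pi>' (\<mu>' c) \<ge> 0" if c: "c \<in> neg_edges E' \<pi>'" for c
  proof -
    define e where "e = \<phi> c"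
    have eB: "e \<in> B" and pc: "\<pi>' c = \<pi> e" using negE'[OF c] by (simp_all add: e_def)
    have eneg: "e \<in> neg_edges E \<pi>" using eB B_neg by auto
    define A0 where "A0 = (\<lambda>q. prod_encode (q, 0)) ` (\<mu> e - P)"
    define Q1 where "Q1 = {q \<in> F'. x q e \<noteq> 0}"
    define A1 where "A1 = (\<lambda>q. prod_encode (q, Suc e)) ` Q1"
    have mu'e: "\<mu>' c = A0 \<union> A1" by (simp add: \<mu>'_def A0_def A1_def Q1_def e_def)
    have fA0: "finite A0" using finmu[OF eneg] by (simp add: A0_def)
    have fQ1: "finite Q1" using finF' by (simp add: Q1_def)
    have fA1: "finite A1" using fQ1 by (simp add: A1_def)
    have dA: "A0 \<inter> A1 = {}" by (auto simp: A0_def A1_def)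
    have sA0: "sum \<pi>' A0 = sum \<pi> (\<mu> e - P)"
    proof -
      have inj: "inj_on (\<lambda>q. prod_encode (q, 0)) (\<mu> e - P)" by (auto simp: inj_on_def)
      have "sum \<pi>' A0 = (\<Sum>q\<in>\<mu> e - P. \<pi>' (prod_encode (q, 0)))"
        unfolding A0_def using sum.reindex[OF inj, of \<pi>'] by simp
      also have "\<dots> = sum \<pi> (\<mu> e - P)"
        using F'_mu[OF eB] by (intro sum.cong refl) (auto simp: pi0)
      finally show ?thesis .
    qed
    have sA1: "sum \<pi>' A1 = b e"
    proof -
      have inj: "inj_on (\<lambda>q. prod_encode (q, Suc e)) Q1" by (auto simp: inj_on_def)
      have "sum \<pi>' A1 = (\<Sum>q\<in>Q1. x q e)"
        unfolding A1_def using sum.reindex[OF inj, of \<pi>'] by (simp add: piS)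
      also have "\<dots> = (\<Sum>q\<in>F'. x q e)"
        unfolding Q1_def sum.inter_filter[OF finF'] by (intro sum.cong) auto
      also have "\<dots> = b e" using xcol eB by simp
      finally show ?thesis .
    qed
    have "sum \<pi>' (\<mu>' c) = sum \<pi> (\<mu> e - P) + sum \<pi> (\<mu> e \<inter> P)"
      unfolding mu'e using sum.union_disjoint[OF fA0 fA1 dA, of \<pi>'] sA0 sA1 by (simp add: b_def)
    also have "\<dots> = sum \<pi> (\<mu> e)" using sum.Int_Diff[OF finmu[OF eneg], of \<pi> P] by (simp add: add.commute)
    finally show ?thesis using iv eneg pc by simp
  qed
  have mg': "multidigraph m E' s' t'"
    unfolding multidigraph_def using finE' E'_phi loops by (auto simp: s'_def t'_def)
  have nodir: "edges_between E' s' t' j i = {}"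
    using E'_phi by (auto simp: edges_between_def s'_def t'_def Eji_mem)
  have split: "split_from E s t \<pi> E' s' t' \<pi>' j i"
    unfolding split_from_def
  proof (intro exI[of _ \<phi>] conjI ballI)
    show "\<phi> ` E' = E - edges_between E s t j i"
    proof
      show "\<phi> ` E' \<subseteq> E - edges_between E s t j i" using E'_phi Eji_def by auto
      show "E - edges_between E s t j i \<subseteq> \<phi> ` E'"
      proof
        fix e assume e0: "e \<in> E - edges_between E s t j i"
        then have e: "e \<in> E - Eji" by (simp add: Eji_def)
        have "sum \<pi>' {c \<in> C. \<phi> c = e} \<noteq> 0" using fibersum[OF e] nz e by auto
        then obtain c where "c \<in> C" "\<phi> c = e" "\<pi>' c \<noteq> 0"
          by (metis (mono_tags, lifting) mem_Collect_eq sum.neutral)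
        then show "e \<in> \<phi> ` E'" by (auto simp: E'_def)
      qed
    qed
  next
    fix e' assume "e' \<in> E'"
    show "s' e' = s (\<phi> e')" by (simp add: s'_def)
    show "t' e' = t (\<phi> e')" by (simp add: t'_def)
  next
    fix e assume e0: "e \<in> E - edges_between E s t j i"
    then have e: "e \<in> E - Eji" by (simp add: Eji_def)
    show "sum \<pi>' {e' \<in> E'. \<phi> e' = e} = \<pi> e" using fiber[OF e] .
    show "card {e' \<in> E'. \<phi> e' = e} \<noteq> 1 \<longrightarrow> s e = j"
    proof
      assume cd: "card {e' \<in> E'. \<phi> e' = e} \<noteq> 1"
      show "s e = j"
      proof (cases "e \<in> F'")
        case True then show ?thesis using F'_src by simp
      next
        case False
        have "{e' \<in> E'. \<phi> e' = e} = {c \<in> {c \<in> C. \<phi> c = e}. \<pi>' c \<noteq> 0}" by (auto simp: E'_def)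
        also have "\<dots> = {prod_encode (e, 0)}"
          unfolding fiberC[OF e] using False e nz by (auto simp: pi0)
        finally show ?thesis using cd by simp
      qed
    qed
  qed
  show ?thesis
    apply (rule exI[of _ E'], rule exI[of _ s'], rule exI[of _ t'], rule exI[of _ \<pi>'])
    using mg' epi iv' lap nodir split unfolding P_graph_def by blast
qed

end
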